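(* Let $j\in\mathbb Z_{\ge1}$. Then $$\sum_{m=0}^{j} i(i-1)\cdots(i-m+1)\,\frac{2^{2m}}{(2m)!}\,\frac{1}{(j-m)!}=0$$ for every $i=-l-\frac12$ with $l\in\{0,1,\dots,j-1\}$ (the product $i(i-1)\cdots(i-m+1)$ being $1$ for $m=0$). *)

theory Defs
  imports Complex_Main
begin

end

theory Submission imports Defs "HOL-Computational_Algebra.Polynomial" begin

lemma pascal_sum:
  fixes f :: "nat \<Rightarrow> real"
  shows "(\<Sum>m\<le>Suc j. (-1)^m * real (Suc j choose m) * f m)
       = (\<Sum>m\<le>j. (-1)^m * real (j choose m) * (f m - f (Suc m)))"
proof -
  have A: "(\<Sum>m\<le>Suc j. (-1)^m * real (Suc j choose m) * f m)
     = f 0 + (\<Sum>m\<le>j. (-1)^(Suc m) * real (j choose m) * f (Suc m))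
           + (\<Sum>m\<le>j. (-1)^(Suc m) * real (j choose Suc m) * f (Suc m))"
  proof -
    have "(\<Sum>m\<le>Suc j. (-1)^m * real (Suc j choose m) * f m)
       = f 0 + (\<Sum>m\<le>j. (-1)^(Suc m) * real (Suc j choose Suc m) * f (Suc m))"
      by (subst sum.atMost_Suc_shift) simp
    also have "\<dots> = f 0 + (\<Sum>m\<le>j. (-1)^(Suc m) * real (j choose m) * f (Suc m)
           + (-1)^(Suc m) * real (j choose Suc m) * f (Suc m))"
      by (simp only: binomial_Suc_Suc of_nat_add distrib_left distrib_right)
    finally show ?thesis by (simp only: sum.distrib add.assoc)
  qed
  have B: "(\<Sum>m\<le>Suc j. (-1)^m * real (j choose m) * f m)
     = f 0 + (\<Sum>m\<le>j. (-1)^(Suc m) * real (j choose Suc m) * f (Suc m))"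
    by (subst sum.atMost_Suc_shift) simp
  have C: "(\<Sum>m\<le>Suc j. (-1)^m * real (j choose m) * f m) = (\<Sum>m\<le>j. (-1)^m * real (j choose m) * f m)"
    by simp
  have D: "(\<Sum>m\<le>j. (-1)^m * real (j choose m) * (f m - f (Suc m)))
     = (\<Sum>m\<le>j. (-1)^m * real (j choose m) * f m) + (\<Sum>m\<le>j. (-1)^(Suc m) * real (j choose m) * f (Suc m))"
    by (subst sum.distrib[symmetric]) (rule sum.cong, auto simp: algebra_simps)
  show ?thesis using A B C D by linarith
qed

lemma diff_deg:
  fixes p :: "real poly"
  defines "q \<equiv> p - p \<circ>\<^sub>p [:1, 1:]"
  shows "q = 0 \<or> degree q < degree p"
proof (cases "degree p = 0")
  case True
  then obtain c where "p = [:c:]" by (meson degree_eq_zeroE)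
  then show ?thesis unfolding q_def by simp
next
  case False
  have d: "degree (p \<circ>\<^sub>p [:1, 1:]) = degree p" by (simp add: degree_pcompose)
  have l: "lead_coeff (p \<circ>\<^sub>p [:1, 1:]) = lead_coeff p" by (simp add: lead_coeff_comp)
  have le: "degree q \<le> degree p" unfolding q_def using d degree_diff_le by (metis order.refl)
  have "coeff q (degree p) = 0" unfolding q_def using d l by simp
  then have "degree q \<noteq> degree p \<or> q = 0" by (metis leading_coeff_0_iff)
  then show ?thesis using le by auto
qed

lemma alt_poly:
  fixes p :: "real poly"
  assumes "degree p < j"
  shows "(\<Sum>m\<le>j. (-1)^m * real (j choose m) * poly p (real m)) = 0"
  using assms
proof (induction j arbitrary: p)
  case 0
  then show ?case by simp
next
  case (Suc j)
  define q where "q = p - p \<circ>\<^sub>p [:1, 1:]"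
  have e: "poly p (real m) - poly p (real (Suc m)) = poly q (real m)" for m
    unfolding q_def by (simp add: poly_pcompose algebra_simps)
  have "(\<Sum>m\<le>Suc j. (-1)^m * real (Suc j choose m) * poly p (real m))
      = (\<Sum>m\<le>j. (-1)^m * real (j choose m) * poly q (real m))"
    using pascal_sum[of j "\<lambda>m. poly p (real m)"] e by simp
  also have "\<dots> = 0"
  proof (cases "q = 0")
    case True then show ?thesis by simp
  next
    case False
    then have "degree q < j" using diff_deg[of p] Suc.prems unfolding q_def by auto
    then show ?thesis using Suc.IH by blast
  qed
  finally show ?case .
qed

lemma Q_step:
  fixes l m :: nat
  shows "(\<Prod>t<l. 2 * real (Suc m) + 2 * real t + 1) * (2 * real m + 1)
       = (\<Prod>t<l. 2 * real m + 2 * real t + 1) * (2 * real m + 2 * real l + 1)"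
proof -
  have "(\<Prod>t<Suc l. 2 * real m + 2 * real t + 1)
      = (\<Prod>t<l. 2 * real m + 2 * real (Suc t) + 1) * (2 * real m + 1)"
    by (subst prod.lessThan_Suc_shift) (simp add: mult.commute)
  moreover have "(\<Prod>t<Suc l. 2 * real m + 2 * real t + 1)
      = (\<Prod>t<l. 2 * real m + 2 * real t + 1) * (2 * real m + 2 * real l + 1)"
    by simp
  moreover have "(\<Prod>t<l. 2 * real m + 2 * real (Suc t) + 1) = (\<Prod>t<l. 2 * real (Suc m) + 2 * real t + 1)"
    by (rule prod.cong) (auto simp: algebra_simps)
  ultimately show ?thesis by simp
qed

lemma A_formula:
  fixes l m :: nat and i :: real
  assumes "i = - real l - 1/2"
  shows "(\<Prod>k<m. (i - real k)) * (2 ^ (2*m) / fact (2*m)) * fact m * (\<Prod>t<l. 2 * real 0 + 2 * real t + 1)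
       = (-1)^m * (\<Prod>t<l. 2 * real m + 2 * real t + 1)"
proof (induction m)
  case 0
  then show ?case by simp
next
  case (Suc m)
  define Qm where "Qm = (\<Prod>t<l. 2 * real m + 2 * real t + 1)"
  define Q1 where "Q1 = (\<Prod>t<l. 2 * real (Suc m) + 2 * real t + 1)"
  define Q0 where "Q0 = (\<Prod>t<l. 2 * real 0 + 2 * real t + 1)"
  define B where "B = (\<Prod>k<m. (i - real k)) * (2 ^ (2*m) / fact (2*m)) * fact m"
  have IH: "B * Q0 = (-1)^m * Qm" using Suc.IH unfolding B_def Q0_def Qm_def .
  have st: "Q1 * (2 * real m + 1) = Qm * (2 * real m + 2 * real l + 1)"
    unfolding Q1_def Qm_def by (rule Q_step)
  have f2: "fact (2 * Suc m) = (fact (2*m) :: real) * (2 * real m + 1) * (2 * real m + 2)"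
    by (simp add: algebra_simps)
  have "(\<Prod>k<Suc m. (i - real k)) * (2 ^ (2*Suc m) / fact (2*Suc m)) * fact (Suc m)
      = B * (i - real m) * 4 * (real m + 1) / ((2 * real m + 1) * (2 * real m + 2))"
    unfolding B_def f2 by (simp add: field_simps power_add power_mult)
  also have "\<dots> = - B * (2 * real m + 2 * real l + 1) / (2 * real m + 1)"
  proof -
    have h: "(i - real m) * 4 * (real m + 1) = (2*real m + 2)*(-(2*real m + 2*real l + 1))"
      by (simp add: assms algebra_simps)
    have h2: "B * (i - real m) * 4 * (real m + 1) = (- B * (2*real m + 2*real l + 1)) * (2*real m + 2)"
    proof -
      have "B * (i - real m) * 4 * (real m + 1) = B * ((i - real m) * 4 * (real m + 1))" by (simp only: mult.assoc)
      also have "\<dots> = B * ((2*real m + 2)*(-(2*real m + 2*real l + 1)))" by (simp only: h)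
      also have "\<dots> = (- B * (2*real m + 2*real l + 1)) * (2*real m + 2)" by (simp add: algebra_simps)
      finally show ?thesis .
    qed
    have nz: "(2 * real m + 2) \<noteq> 0" by simp
    show ?thesis unfolding h2 by (rule nonzero_mult_divide_mult_cancel_right[OF nz])
  qed
  finally have e: "(\<Prod>k<Suc m. (i - real k)) * (2 ^ (2*Suc m) / fact (2*Suc m)) * fact (Suc m)
      = - B * (2 * real m + 2 * real l + 1) / (2 * real m + 1)" .
  have "- B * (2 * real m + 2 * real l + 1) / (2 * real m + 1) * Q0
     = - (B * Q0) * (2 * real m + 2 * real l + 1) / (2 * real m + 1)" by simp
  also have "\<dots> = - ((-1)^m * (Qm * (2 * real m + 2 * real l + 1))) / (2 * real m + 1)"
    using IH by simp
  also have "\<dots> = (-1)^Suc m * Q1"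
    using st[symmetric] by (simp add: field_simps)
  finally show ?case using e unfolding Q0_def Q1_def by simp
qed

theorem lemma3p12:
  fixes j l :: nat and i :: real
  assumes "j \<ge> 1" and "l \<le> j - 1" and "i = - real l - 1/2"
  shows "(\<Sum>m=0..j. (\<Prod>k<m. (i - real k)) * (2 ^ (2*m) / fact (2*m)) * (1 / fact (j - m))) = 0"
proof -
  define Q where "Q = (\<lambda>m::nat. (\<Prod>t<l. 2 * real m + 2 * real t + 1))"
  define P where "P = (\<Prod>t<l. [:2 * real t + 1, 2:])"
  have Q0: "Q 0 > 0" unfolding Q_def by (intro prod_pos) auto
  have PQ: "poly P (real m) = Q m" for m
    unfolding P_def Q_def by (simp add: poly_prod algebra_simps)
  have degP: "degree P < j"
  proof -
    have "degree P \<le> (\<Sum>t<l. degree [:2 * real t + 1, (2::real):])"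
      unfolding P_def using degree_prod_sum_le[of "{..<l}" "\<lambda>t. [:2 * real t + 1, (2::real):]"] by (simp add: o_def)
    also have "\<dots> \<le> l" by simp
    finally show ?thesis using assms by linarith
  qed
  have tm: "(\<Prod>k<m. (i - real k)) * (2 ^ (2*m) / fact (2*m)) * (1 / fact (j - m))
      = (1 / (Q 0 * fact j)) * ((-1)^m * real (j choose m) * poly P (real m))" if "m \<le> j" for m
  proof -
    have A: "(\<Prod>k<m. (i - real k)) * (2 ^ (2*m) / fact (2*m)) * fact m * Q 0 = (-1)^m * Q m"
      using A_formula[OF assms(3), of m] unfolding Q_def by simp
    have b: "real (j choose m) = fact j / (fact m * fact (j - m))"
      using binomial_fact[OF that] by simp
    have fm: "(fact m :: real) \<noteq> 0" "(fact (j-m) :: real) \<noteq> 0" "(fact j :: real) \<noteq> 0" by simp_all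
    show ?thesis unfolding b PQ using A Q0 fm
      by (simp add: field_simps)
  qed
  have "(\<Sum>m=0..j. (\<Prod>k<m. (i - real k)) * (2 ^ (2*m) / fact (2*m)) * (1 / fact (j - m)))
      = (\<Sum>m\<le>j. (1 / (Q 0 * fact j)) * ((-1)^m * real (j choose m) * poly P (real m)))"
    unfolding atLeast0AtMost by (rule sum.cong) (simp_all only: atMost_iff tm)
  also have "\<dots> = (1 / (Q 0 * fact j)) * (\<Sum>m\<le>j. (-1)^m * real (j choose m) * poly P (real m))"
    by (simp add: sum_distrib_left)
  also have "\<dots> = 0" using alt_poly[OF degP] by simp
  finally show ?thesis .
qed

end
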